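(* Let $t_1(x,y):=(x\wedge y)\vee(x\vee y)'$ and $t(x,y,z):=\Bigg(\bigg(\Big(\big((x\vee y)\wedge z\big)'\vee x\Big)\wedge(x\vee y)\bigg)'\vee x\Bigg)\wedge\Big(\big((x\vee y)\wedge z\big)'\vee y\Big)\wedge(x\vee y)$. Then the variety $\mathcal V$ satisfies the identities: (i) $x\vee(x\wedge y)'\approx1$; (ii) $y\vee(x\wedge y)'\approx1$; (iii) $x\approx(x\vee y)\wedge\big(x\vee(x\vee y)'\big)$; (iv) $y\approx(x\vee y)\wedge\big(y\vee(x\vee y)'\big)$; (v) $(x\vee y)\wedge t_1(x,y)\approx x\wedge y$; (vi) $t_1(x,x)\approx1$; (vii) $t\big(x,y,t_1(x,y)\big)\approx x$; (viii) $t(x,y,1)\approx y$.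
   Context: $\mathcal V$ is the variety of algebras $(L,\vee,\wedge,{}',0,1)$ that are bounded lattices with a complementation $'$ (i.e. $x\vee x'\approx1$, $x\wedge x'\approx0$) satisfying the identities $x\vee y'\approx y'\vee\big((x\vee y')\wedge y\big)$ and $x\wedge y\approx x\wedge\big((x\wedge y)\vee x'\big)$. *)

theory Defs
  imports Main
begin

definition in_V :: "('a::bounded_lattice \<Rightarrow> 'a) \<Rightarrow> bool" where
  "in_V c \<longleftrightarrow>
     (\<forall>x. sup x (c x) = top) \<and>
     (\<forall>x. inf x (c x) = bot) \<and>
     (\<forall>x y. sup x (c y) = sup (c y) (inf (sup x (c y)) y)) \<and>
     (\<forall>x y. inf x y = inf x (sup (inf x y) (c x)))"

definition t1 :: "('a::bounded_lattice \<Rightarrow> 'a) \<Rightarrow> 'a \<Rightarrow> 'a \<Rightarrow> 'a" where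
  "t1 c x y = sup (inf x y) (c (sup x y))"

definition tt :: "('a::bounded_lattice \<Rightarrow> 'a) \<Rightarrow> 'a \<Rightarrow> 'a \<Rightarrow> 'a \<Rightarrow> 'a" where
  "tt c x y z =
     inf (inf (sup (c (inf (sup (c (inf (sup x y) z)) x) (sup x y))) x)
              (sup (c (inf (sup x y) z)) y))
         (sup x y)"

end

theory Submission
  imports Defs
begin

lemma V_A3: "in_V c \<Longrightarrow> (c y :: 'a::bounded_lattice) \<le> a \<Longrightarrow> a = sup (c y) (inf a y)"
proof -
  assume V: "in_V c" and le: "c y \<le> a"
  have "sup a (c y) = sup (c y) (inf (sup a (c y)) y)" using V unfolding in_V_def by blast
  moreover have "sup a (c y) = a" using le by (rule sup.absorb1)
  ultimately show ?thesis by simp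
qed

lemma V_A4: "in_V c \<Longrightarrow> (b :: 'a::bounded_lattice) \<le> x \<Longrightarrow> b = inf x (sup b (c x))"
proof -
  assume V: "in_V c" and le: "b \<le> x"
  have "inf x b = inf x (sup (inf x b) (c x))" using V unfolding in_V_def by blast
  moreover have "inf x b = b" using le by (rule inf.absorb2)
  ultimately show ?thesis by simp
qed

lemma V_i: assumes "in_V c" shows "sup x (c (inf x y)) = (top::'a::bounded_lattice)"
proof -
  have "sup x (c (inf x y)) = sup (c (inf x y)) (inf (sup x (c (inf x y))) (inf x y))"
    by (rule V_A3[OF assms]) simp
  also have "inf (sup x (c (inf x y))) (inf x y) = inf x y"
    by (simp add: inf.absorb2 le_supI1)
  also have "sup (c (inf x y)) (inf x y) = top"
    using assms unfolding in_V_def by (simp add: sup.commute)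
  finally show ?thesis .
qed

lemma V_ii: assumes "in_V c" shows "sup y (c (inf x y)) = (top::'a::bounded_lattice)"
  using V_i[OF assms, of y x] by (simp add: inf.commute)

lemma V_iii: assumes "in_V c" shows "(x::'a::bounded_lattice) = inf (sup x y) (sup x (c (sup x y)))"
  by (rule V_A4[OF assms]) simp

lemma V_iv: assumes "in_V c" shows "(y::'a::bounded_lattice) = inf (sup x y) (sup y (c (sup x y)))"
  by (rule V_A4[OF assms]) simp

lemma V_v: assumes "in_V c" shows "inf (sup x y) (t1 c x y) = (inf x y::'a::bounded_lattice)"
  unfolding t1_def using V_A4[OF assms, of "inf x y" "sup x y"]
  by (simp add: le_supI1)

theorem lemma1:
  fixes c :: "'a::bounded_lattice \<Rightarrow> 'a"
  assumes "in_V c"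
  shows "\<forall>x y.
           sup x (c (inf x y)) = top \<and>
           sup y (c (inf x y)) = top \<and>
           x = inf (sup x y) (sup x (c (sup x y))) \<and>
           y = inf (sup x y) (sup y (c (sup x y))) \<and>
           inf (sup x y) (t1 c x y) = inf x y \<and>
           t1 c x x = top \<and>
           tt c x y (t1 c x y) = x \<and>
           tt c x y top = y"
proof (intro allI conjI)
  fix x y :: 'a
  show "sup x (c (inf x y)) = top" by (rule V_i[OF assms])
  show "sup y (c (inf x y)) = top" by (rule V_ii[OF assms])
  show "x = inf (sup x y) (sup x (c (sup x y)))" by (rule V_iii[OF assms])
  show "y = inf (sup x y) (sup y (c (sup x y)))" by (rule V_iv[OF assms])
  show "inf (sup x y) (t1 c x y) = inf x y" by (rule V_v[OF assms])
  show "t1 c x x = top" using assms unfolding t1_def in_V_def by simp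
  have e3: "inf (sup (c (sup x y)) x) (sup x y) = x"
  proof -
    have "inf (sup (c (sup x y)) x) (sup x y) = inf (sup x y) (sup x (c (sup x y)))"
      by (simp add: inf_commute sup_commute)
    also have "\<dots> = x" using V_iii[OF assms, where x=x and y=y] by (rule sym)
    finally show ?thesis .
  qed
  have e4: "inf (sup (c (sup x y)) y) (sup x y) = y"
  proof -
    have "inf (sup (c (sup x y)) y) (sup x y) = inf (sup x y) (sup y (c (sup x y)))"
      by (simp add: inf_commute sup_commute)
    also have "\<dots> = y" using V_iv[OF assms, where x=x and y=y] by (rule sym)
    finally show ?thesis .
  qed
  have cx: "sup (c x) x = top" using assms unfolding in_V_def by (simp add: sup.commute)
  show "tt c x y (t1 c x y) = x"
    unfolding tt_def V_v[OF assms]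
    using V_i[OF assms, where x=x and y=y] V_ii[OF assms, where x=x and y=y] e3
    by (simp add: sup.commute)
  show "tt c x y top = y"
    unfolding tt_def using e3 e4 cx by (simp add: inf.assoc)
qed

end
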